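(* With $G$ as defined below, $G$ is steep at the relative boundary of $\mathcal{P}_{\rm s}$: for any $p_0\in\partial\mathcal{P}_{\rm s}$, any $p_1\in\mathcal{P}_{\rm s}$, and $p_t=(1-t)p_0+tp_1$, one has \[ \lim_{t\to+0}\frac{d}{dt}G(p_t)=-\infty , \] where for $t\in(0,1)$, $\frac{d}{dt}G(p_t)=\sum_{(x,y)\in\mathcal{E}}(p_1(x,y)-p_0(x,y))\log\frac{p_t(y|x)}{v_0(y|x)}$. In particular there exists $(x,y)\in\mathcal{E}$ with $p_0(x,y)=0$ and $p_t(y|x)\to0$ as $t\to+0$.
   Context: $\mathcal{X}$ is a finite set and $\mathcal{E}\subset\mathcal{X}^2$ is such that the directed graph $(\mathcal{X},\mathcal{E})$ is strongly connected (for every $(x,y)$ there is a directed path from $x$ to $y$). $\mathcal{W}(\mathcal{X},\mathcal{E})$ is the set of Markov kernels $w(y|x)$ on $\mathcal{X}$ ($w\ge0$, $\sum_y w(y|x)=1$) with $\{(x,y)\mid w(y|x)>0\}=\mathcal{E}$; fix $v_0\in\mathcal{W}(\mathcal{X},\mathcal{E})$. $\mathcal{P}_{\rm s}$ is the set of probability distributions $p$ on $\mathcal{X}^2$ that are stationary, i.e. $\sum_y p(x,y)=\sum_y p(y,x)$ for all $x$, and whose support equals $\mathcal{E}$; $\mathrm{cl}(\mathcal{P}_{\rm s})$ is its closure in $\mathbb{R}^{\mathcal{X}^2}$ (stationary distributions with support contained in $\mathcal{E}$) and $\partial\mathcal{P}_{\rm s}=\mathrm{cl}(\mathcal{P}_{\rm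 s})\setminus\mathcal{P}_{\rm s}$ (those whose support is a proper subset of $\mathcal{E}$). For $p\in\mathrm{cl}(\mathcal{P}_{\rm s})$, $\bar p(x)=\sum_y p(x,y)$, $p(y|x)=p(x,y)/\bar p(x)$ when $\bar p(x)>0$, and $G(p)=\sum_{(x,y)\in\mathcal{E}}p(x,y)\log\frac{p(x,y)}{v_0(y|x)}-\sum_{x}\bar p(x)\log\bar p(x)$ with $0\log0=0$. *)

theory Defs
  imports "HOL-Analysis.Analysis"
begin

definition strongly_connected :: "('a \<times> 'a) set \<Rightarrow> bool" where
  "strongly_connected E \<longleftrightarrow> (\<forall>x y. (x, y) \<in> E\<^sup>+)"

text \<open>Markov kernels with support exactly E; w y x stands for w(y|x).\<close>
definition kernels_W :: "('a::finite \<times> 'a) set \<Rightarrow> ('a \<Rightarrow> 'a \<Rightarrow> real) set" where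
  "kernels_W E = {w. (\<forall>x y. w y x \<ge> 0) \<and> (\<forall>x. (\<Sum>y\<in>UNIV. w y x) = 1)
                     \<and> {(x, y). w y x > 0} = E}"

definition cl_Ps :: "('a::finite \<times> 'a) set \<Rightarrow> ('a \<times> 'a \<Rightarrow> real) set" where
  "cl_Ps E = {p. (\<forall>z. p z \<ge> 0) \<and> (\<Sum>z\<in>UNIV. p z) = 1
               \<and> (\<forall>x. (\<Sum>y\<in>UNIV. p (x, y)) = (\<Sum>y\<in>UNIV. p (y, x)))
               \<and> {z. p z > 0} \<subseteq> E}"

definition Ps :: "('a::finite \<times> 'a) set \<Rightarrow> ('a \<times> 'a \<Rightarrow> real) set" where
  "Ps E = {p \<in> cl_Ps E. {z. p z > 0} = E}"

definition bdry_Ps :: "('a::finite \<times> 'a) set \<Rightarrow> ('a \<times> 'a \<Rightarrow> real) set" where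
  "bdry_Ps E = cl_Ps E - Ps E"

definition marg :: "('a::finite \<times> 'a \<Rightarrow> real) \<Rightarrow> 'a \<Rightarrow> real" where
  "marg p x = (\<Sum>y\<in>UNIV. p (x, y))"

text \<open>Conditional p(y|x) = p(x,y)/pbar(x) (only used where pbar(x) > 0).\<close>
definition cond :: "('a::finite \<times> 'a \<Rightarrow> real) \<Rightarrow> 'a \<Rightarrow> 'a \<Rightarrow> real" where
  "cond p y x = p (x, y) / marg p x"

text \<open>x log x with 0 log 0 = 0 (Isabelle's ln 0 = 0 already gives this).\<close>
definition xlogx :: "real \<Rightarrow> real" where
  "xlogx u = (if u = 0 then 0 else u * ln u)"

definition G :: "('a::finite \<times> 'a) set \<Rightarrow> ('a \<Rightarrow> 'a \<Rightarrow> real) \<Rightarrow> ('a \<times> 'a \<Rightarrow> real) \<Rightarrow> real" where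
  "G E v0 p = (\<Sum>(x, y)\<in>E. (if p (x, y) = 0 then 0 else p (x, y) * ln (p (x, y) / v0 y x)))
              - (\<Sum>x\<in>UNIV. xlogx (marg p x))"

end

theory Submission
  imports Defs
begin

lemma marg_affine:
  "marg (\<lambda>z. (1 - t) * p0 z + t * p1 z) x = (1 - t) * marg p0 x + t * marg p1 x"
  unfolding marg_def by (simp add: sum.distrib sum_distrib_left)

lemma sum_E_fst:
  fixes E :: "('a::finite \<times> 'a) set" and q :: "'a \<times> 'a \<Rightarrow> real"
  assumes "\<And>z. z \<notin> E \<Longrightarrow> q z = 0"
  shows "(\<Sum>z\<in>E. q z * h (fst z)) = (\<Sum>x\<in>UNIV. h x * (\<Sum>y\<in>UNIV. q (x, y)))"
proof -
  have "(\<Sum>z\<in>E. q z * h (fst z)) = (\<Sum>z\<in>UNIV. q z * h (fst z))"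
    by (rule sum.mono_neutral_left) (auto simp: assms)
  also have "\<dots> = (\<Sum>x\<in>UNIV. \<Sum>y\<in>UNIV. q (x, y) * h x)"
    by (simp add: sum.cartesian_product split_def UNIV_Times_UNIV[symmetric] del: UNIV_Times_UNIV)
  also have "\<dots> = (\<Sum>x\<in>UNIV. h x * (\<Sum>y\<in>UNIV. q (x, y)))"
    by (simp add: sum_distrib_left mult.commute)
  finally show ?thesis .
qed

lemma deriv_term:
  fixes v :: real
  assumes "u t > 0" "v > 0" "(u has_real_derivative u') (at t)"
  shows "((\<lambda>s. u s * ln (u s / v)) has_real_derivative (u' * ln (u t / v) + u')) (at t)"
  using assms by (auto intro!: derivative_eq_intros simp: field_simps)

lemma if_mult_zero: "(if (a::real) = 0 then 0 else a * b) = a * b" by simp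

theorem mainTheorem6:
  fixes E :: "('a::finite \<times> 'a) set" and v0 :: "'a \<Rightarrow> 'a \<Rightarrow> real"
    and p0 p1 :: "'a \<times> 'a \<Rightarrow> real"
  assumes "strongly_connected E"
    and "v0 \<in> kernels_W E"
    and "p0 \<in> bdry_Ps E"
    and "p1 \<in> Ps E"
  defines "pt \<equiv> (\<lambda>t::real. \<lambda>z. (1 - t) * p0 z + t * p1 z)"
  shows "(\<forall>t\<in>{0<..<1}. ((\<lambda>s. G E v0 (pt s)) has_real_derivative
            (\<Sum>(x, y)\<in>E. (p1 (x, y) - p0 (x, y)) * ln (cond (pt t) y x / v0 y x))) (at t))
      \<and> filterlim (\<lambda>t. \<Sum>(x, y)\<in>E. (p1 (x, y) - p0 (x, y)) * ln (cond (pt t) y x / v0 y x))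
            at_bot (at_right 0)
      \<and> (\<exists>(x, y)\<in>E. p0 (x, y) = 0 \<and> ((\<lambda>t. cond (pt t) y x) \<longlongrightarrow> 0) (at_right 0))"
proof -
  have p0nn: "\<And>z. p0 z \<ge> 0" and p0sum: "(\<Sum>z\<in>UNIV. p0 z) = 1"
    and p0stat: "\<And>x. (\<Sum>y\<in>UNIV. p0 (x, y)) = (\<Sum>y\<in>UNIV. p0 (y, x))"
    and p0sub: "{z. p0 z > 0} \<subseteq> E" and p0ne: "{z. p0 z > 0} \<noteq> E"
    using assms(3) unfolding bdry_Ps_def cl_Ps_def Ps_def by auto
  have p1nn: "\<And>z. p1 z \<ge> 0" and p1supp: "{z. p1 z > 0} = E"
    using assms(4) unfolding Ps_def cl_Ps_def by auto
  have p0out: "\<And>z. z \<notin> E \<Longrightarrow> p0 z = 0" using p0nn p0sub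
    by (metis mem_Collect_eq order_less_le subset_eq)
  have p1out: "\<And>z. z \<notin> E \<Longrightarrow> p1 z = 0" using p1nn p1supp
    by (metis mem_Collect_eq order_less_le)
  have p1pos: "\<And>z. z \<in> E \<Longrightarrow> p1 z > 0" using p1supp by auto
  have vpos: "\<And>x y. (x, y) \<in> E \<Longrightarrow> v0 y x > 0"
    using assms(2) unfolding kernels_W_def by auto
  have trE: "\<And>x y. (x, y) \<in> E\<^sup>+" using assms(1) unfolding strongly_connected_def by auto
  have outedge: "\<And>x. \<exists>y. (x, y) \<in> E"
  proof -
    fix x
    have "(x, x) \<in> E\<^sup>+" by (rule trE)
    then show "\<exists>y. (x, y) \<in> E" by (induction rule: converse_trancl_induct) auto
  qed
  have m0nn: "\<And>x. marg p0 x \<ge> 0" unfolding marg_def by (simp add: p0nn sum_nonneg)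
  have m1pos: "\<And>x. marg p1 x > 0"
  proof -
    fix x
    obtain y where y: "(x, y) \<in> E" using outedge by blast
    have "p1 (x, y) \<le> marg p1 x" unfolding marg_def
      by (rule member_le_sum) (auto simp: p1nn)
    then show "marg p1 x > 0" using p1pos[OF y] by simp
  qed
  have mpt: "\<And>t x. marg (pt t) x = (1 - t) * marg p0 x + t * marg p1 x"
    unfolding pt_def by (rule marg_affine)
  have mptpos: "\<And>t x. 0 < t \<Longrightarrow> t < 1 \<Longrightarrow> marg (pt t) x > 0"
  proof -
    fix t :: real and x assume "0 < t" "t < 1"
    then have "(1 - t) * marg p0 x \<ge> 0" "t * marg p1 x > 0" using m0nn m1pos by auto
    then show "marg (pt t) x > 0" using mpt by simp
  qed
  have ptpos: "\<And>t z. 0 < t \<Longrightarrow> t < 1 \<Longrightarrow> z \<in> E \<Longrightarrow> pt t z > 0"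
  proof -
    fix t :: real and z assume "0 < t" "t < 1" "z \<in> E"
    then have "(1 - t) * p0 z \<ge> 0" "t * p1 z > 0" using p0nn p1pos by auto
    then show "pt t z > 0" unfolding pt_def by simp
  qed
  have key: "\<exists>x y. (x, y) \<in> E \<and> p0 (x, y) = 0 \<and> marg p0 x > 0"
  proof (rule ccontr)
    assume H: "\<not> ?thesis"
    have step: "marg p0 y > 0" if "marg p0 x > 0" "(x, y) \<in> E" for x y
    proof -
      have "p0 (x, y) \<noteq> 0" using H that by blast
      then have "p0 (x, y) > 0" using p0nn[of "(x, y)"] by linarith
      moreover have "p0 (x, y) \<le> (\<Sum>w\<in>UNIV. p0 (w, y))"
        by (rule member_le_sum) (auto simp: p0nn)
      ultimately show ?thesis using p0stat[of y] unfolding marg_def by linarith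
    qed
    have "(\<Sum>x\<in>UNIV. marg p0 x) = 1"
      using p0sum unfolding marg_def
      by (simp add: sum.cartesian_product UNIV_Times_UNIV[symmetric] split_def del: UNIV_Times_UNIV)
    then obtain x0 where x0: "marg p0 x0 > 0"
      by (metis (no_types, lifting) leI sum_nonpos zero_less_one not_less)
    have allpos: "marg p0 x > 0" for x
    proof -
      have "(x0, x) \<in> E\<^sup>+" by (rule trE)
      then show ?thesis
        by (induction rule: trancl_induct) (use x0 step in blast)+
    qed
    have "{z. p0 z > 0} = E"
    proof
      show "E \<subseteq> {z. p0 z > 0}"
      proof
        fix z assume "z \<in> E"
        then obtain x y where z: "z = (x, y)" "(x, y) \<in> E" by (cases z) auto
        then have "p0 (x, y) \<noteq> 0" using H allpos by blast
        then show "z \<in> {z. p0 z > 0}" using p0nn[of z] z by auto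
      qed
    qed (rule p0sub)
    then show False using p0ne by blast
  qed
  have part1: "\<forall>t\<in>{0<..<1}. ((\<lambda>s. G E v0 (pt s)) has_real_derivative
            (\<Sum>(x, y)\<in>E. (p1 (x, y) - p0 (x, y)) * ln (cond (pt t) y x / v0 y x))) (at t)"
  proof
    fix t :: real assume t: "t \<in> {0<..<1}"
    then have t0: "0 < t" and t1: "t < 1" by auto
    have Geq: "G E v0 p = (\<Sum>z\<in>E. p z * ln (p z / v0 (snd z) (fst z)))
                 - (\<Sum>x\<in>UNIV. marg p x * ln (marg p x / 1))" for p
      unfolding G_def xlogx_def by (simp add: split_def if_mult_zero)
    have dpt: "((\<lambda>s. pt s z) has_real_derivative (p1 z - p0 z)) (at t)" for z
      unfolding pt_def by (auto intro!: derivative_eq_intros)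
    have dm: "((\<lambda>s. marg (pt s) x) has_real_derivative (marg p1 x - marg p0 x)) (at t)" for x
      unfolding mpt by (auto intro!: derivative_eq_intros)
    have D1: "((\<lambda>s. \<Sum>z\<in>E. pt s z * ln (pt s z / v0 (snd z) (fst z))) has_real_derivative
        (\<Sum>z\<in>E. (p1 z - p0 z) * ln (pt t z / v0 (snd z) (fst z)) + (p1 z - p0 z))) (at t)"
      apply (rule DERIV_sum)
      apply (rule deriv_term)
      using ptpos[OF t0 t1] vpos dpt by auto
    have D2: "((\<lambda>s. \<Sum>x\<in>UNIV. marg (pt s) x * ln (marg (pt s) x / 1)) has_real_derivative
        (\<Sum>x\<in>UNIV. (marg p1 x - marg p0 x) * ln (marg (pt t) x / 1) + (marg p1 x - marg p0 x))) (at t)"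
      apply (rule DERIV_sum)
      apply (rule deriv_term)
      using mptpos[OF t0 t1] dm by auto
    have D: "((\<lambda>s. G E v0 (pt s)) has_real_derivative
        (\<Sum>z\<in>E. (p1 z - p0 z) * ln (pt t z / v0 (snd z) (fst z)) + (p1 z - p0 z))
        - (\<Sum>x\<in>UNIV. (marg p1 x - marg p0 x) * ln (marg (pt t) x / 1) + (marg p1 x - marg p0 x))) (at t)"
      unfolding Geq by (rule DERIV_diff[OF D1 D2])
    define d where "d z = p1 z - p0 z" for z
    have dout: "z \<notin> E \<Longrightarrow> d z = 0" for z using p0out p1out d_def by auto
    have dm_eq: "(\<Sum>y\<in>UNIV. d (x, y)) = marg p1 x - marg p0 x" for x
      unfolding d_def marg_def by (simp add: sum_subtractf)
    have lnsplit: "ln (cond (pt t) (snd z) (fst z) / v0 (snd z) (fst z))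
        = ln (pt t z / v0 (snd z) (fst z)) - ln (marg (pt t) (fst z))" if "z \<in> E" for z
    proof -
      have a: "pt t z > 0" using ptpos[OF t0 t1 that] .
      have b: "v0 (snd z) (fst z) > 0" using vpos[of "fst z" "snd z"] that by simp
      have c: "marg (pt t) (fst z) > 0" using mptpos[OF t0 t1] .
      have "cond (pt t) (snd z) (fst z) / v0 (snd z) (fst z)
          = (pt t z / v0 (snd z) (fst z)) / marg (pt t) (fst z)"
        unfolding cond_def by simp
      moreover have "ln ((pt t z / v0 (snd z) (fst z)) / marg (pt t) (fst z))
          = ln (pt t z / v0 (snd z) (fst z)) - ln (marg (pt t) (fst z))"
        by (rule ln_divide_pos) (use a b c in auto)
      ultimately show ?thesis by simp
    qed
    have S1: "(\<Sum>z\<in>E. d z * ln (marg (pt t) (fst z))) = (\<Sum>x\<in>UNIV. ln (marg (pt t) x) * (marg p1 x - marg p0 x))"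
      using sum_E_fst[of E d "\<lambda>x. ln (marg (pt t) x)", OF dout] dm_eq by simp
    have S2: "(\<Sum>z\<in>E. d z) = (\<Sum>x\<in>UNIV. (marg p1 x - marg p0 x))"
      using sum_E_fst[of E d "\<lambda>x. 1", OF dout] dm_eq by simp
    have "(\<Sum>(x, y)\<in>E. (p1 (x, y) - p0 (x, y)) * ln (cond (pt t) y x / v0 y x))
        = (\<Sum>z\<in>E. d z * ln (pt t z / v0 (snd z) (fst z)) - d z * ln (marg (pt t) (fst z)))"
      unfolding split_def d_def by (rule sum.cong) (auto simp: lnsplit right_diff_distrib)
    also have "\<dots> = (\<Sum>z\<in>E. (p1 z - p0 z) * ln (pt t z / v0 (snd z) (fst z)) + (p1 z - p0 z))
        - (\<Sum>x\<in>UNIV. (marg p1 x - marg p0 x) * ln (marg (pt t) x / 1) + (marg p1 x - marg p0 x))"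
      using S1 S2 unfolding d_def
      by (simp add: sum_subtractf sum.distrib mult.commute)
    finally show "((\<lambda>s. G E v0 (pt s)) has_real_derivative
            (\<Sum>(x, y)\<in>E. (p1 (x, y) - p0 (x, y)) * ln (cond (pt t) y x / v0 y x))) (at t)"
      using D by simp
  qed
  have part2: "filterlim (\<lambda>t. \<Sum>(x, y)\<in>E. (p1 (x, y) - p0 (x, y)) * ln (cond (pt t) y x / v0 y x))
            at_bot (at_right 0)"
  proof -
    define F where "F t z = (p1 z - p0 z) * ln (cond (pt t) (snd z) (fst z) / v0 (snd z) (fst z))" for t z
    define c where "c z = (if p0 z = 0 \<and> marg p0 (fst z) > 0 then p1 z else 0)" for z
    have ev: "eventually (\<lambda>t::real. t \<in> {0<..<1}) (at_right 0)"
      by (rule eventually_at_right_real) simp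
    have condpt: "cond (pt t) y x = ((1 - t) * p0 (x, y) + t * p1 (x, y)) / ((1 - t) * marg p0 x + t * marg p1 x)"
      for t x y unfolding cond_def mpt by (simp add: pt_def)
    have lim: "\<exists>L. ((\<lambda>t. F t z - c z * ln t) \<longlongrightarrow> L) (at_right 0)" if zE: "z \<in> E" for z
    proof -
      obtain x y where z: "z = (x, y)" by (cases z)
      have xyE: "(x, y) \<in> E" using zE z by simp
      have v: "v0 y x > 0" using vpos[OF xyE] .
      have p1z: "p1 (x, y) > 0" using p1pos[OF xyE] .
      show ?thesis
      proof (cases "p0 (x, y) = 0")
        case False
        then have p0z: "p0 (x, y) > 0" using p0nn[of "(x, y)"] by linarith
        have "p0 (x, y) \<le> marg p0 x" unfolding marg_def
          by (rule member_le_sum) (auto simp: p0nn)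
        then have m0: "marg p0 x > 0" using p0z by linarith
        have cz: "c (x, y) = 0" using False z c_def by simp
        have "((\<lambda>t. (p1 (x, y) - p0 (x, y)) * ln (((1 - t) * p0 (x, y) + t * p1 (x, y)) / ((1 - t) * marg p0 x + t * marg p1 x) / v0 y x))
           \<longlongrightarrow> (p1 (x, y) - p0 (x, y)) * ln (((1 - 0) * p0 (x, y) + 0 * p1 (x, y)) / ((1 - 0) * marg p0 x + 0 * marg p1 x) / v0 y x)) (at_right 0)"
        proof -
          have d: "((\<lambda>t::real. (1 - t) * marg p0 x + t * marg p1 x) \<longlongrightarrow> (1 - 0) * marg p0 x + 0 * marg p1 x) (at_right 0)"
            by (intro tendsto_intros)
          have n: "((\<lambda>t::real. (1 - t) * p0 (x, y) + t * p1 (x, y)) \<longlongrightarrow> (1 - 0) * p0 (x, y) + 0 * p1 (x, y)) (at_right 0)"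
            by (intro tendsto_intros)
          have q: "((\<lambda>t::real. ((1 - t) * p0 (x, y) + t * p1 (x, y)) / ((1 - t) * marg p0 x + t * marg p1 x) / v0 y x) \<longlongrightarrow> ((1 - 0) * p0 (x, y) + 0 * p1 (x, y)) / ((1 - 0) * marg p0 x + 0 * marg p1 x) / v0 y x) (at_right 0)"
            by (intro tendsto_divide[OF tendsto_divide[OF n d]] tendsto_const) (use m0 v in auto)
          have "((1 - 0) * p0 (x, y) + 0 * p1 (x, y)) / ((1 - 0) * marg p0 x + 0 * marg p1 x) / v0 y x \<noteq> 0" using m0 v p0z by simp
          from tendsto_ln[OF q this] show ?thesis by (rule tendsto_mult_left)
        qed
        then have "((\<lambda>t. F t z - c z * ln t) \<longlongrightarrow> (p1 (x, y) - p0 (x, y)) * ln (((1 - 0) * p0 (x, y) + 0 * p1 (x, y)) / ((1 - 0) * marg p0 x + 0 * marg p1 x) / v0 y x)) (at_right 0)"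
          unfolding z F_def cz condpt by simp
        then show ?thesis by blast
      next
        case True
        note p0z = True
        show ?thesis
        proof (cases "marg p0 x = 0")
          case True
          have row0: "p0 (x, w) = 0" for w
          proof -
            have "(\<Sum>w\<in>UNIV. p0 (x, w)) = 0" using True unfolding marg_def .
            then show ?thesis using p0nn by (simp add: sum_nonneg_eq_0_iff)
          qed
          have cz: "c (x, y) = 0" using True z c_def by simp
          have "\<forall>\<^sub>F t in at_right 0. (p1 (x, y) - p0 (x, y)) * ln (p1 (x, y) / marg p1 x / v0 y x) = F t z - c z * ln t"
            using ev
          proof (rule eventually_mono)
            fix t :: real assume "t \<in> {0<..<1}"
            then have "t \<noteq> 0" by auto
            then have "cond (pt t) y x = p1 (x, y) / marg p1 x"
              unfolding condpt using row0 True by simp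
            then show "(p1 (x, y) - p0 (x, y)) * ln (p1 (x, y) / marg p1 x / v0 y x) = F t z - c z * ln t"
              unfolding z F_def cz by simp
          qed
          then have "((\<lambda>t. F t z - c z * ln t) \<longlongrightarrow> (p1 (x, y) - p0 (x, y)) * ln (p1 (x, y) / marg p1 x / v0 y x)) (at_right 0)"
            by (rule Lim_transform_eventually[OF tendsto_const])
          then show ?thesis by blast
        next
          case False
          then have m0: "marg p0 x > 0" using m0nn[of x] by linarith
          have cz: "c (x, y) = p1 (x, y)" using p0z m0 z c_def by simp
          have ev3: "\<forall>\<^sub>F t in at_right 0. p1 (x, y) * ln (p1 (x, y) / ((1 - t) * marg p0 x + t * marg p1 x) / v0 y x) = F t z - c z * ln t"
            using ev
          proof (rule eventually_mono)
            fix t :: real assume t: "t \<in> {0<..<1}"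
            have mp: "(1 - t) * marg p0 x + t * marg p1 x > 0" using mptpos[of t x] t mpt by auto
            define A where "A = p1 (x, y) / ((1 - t) * marg p0 x + t * marg p1 x) / v0 y x"
            have A: "A > 0" unfolding A_def using mp p1z v by simp
            have "cond (pt t) y x / v0 y x = t * A"
              unfolding condpt A_def using p0z by simp
            moreover have "ln (t * A) = ln t + ln A"
              by (rule ln_mult_pos) (use t A in auto)
            ultimately have e: "ln (cond (pt t) y x / v0 y x) = ln t + ln A" by simp
            show "p1 (x, y) * ln (p1 (x, y) / ((1 - t) * marg p0 x + t * marg p1 x) / v0 y x) = F t z - c z * ln t"
              unfolding z F_def cz fst_conv snd_conv e p0z A_def[symmetric] by (simp add: ring_distribs)
          qed
          have lim3: "((\<lambda>t. p1 (x, y) * ln (p1 (x, y) / ((1 - t) * marg p0 x + t * marg p1 x) / v0 y x))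
             \<longlongrightarrow> p1 (x, y) * ln (p1 (x, y) / ((1 - 0) * marg p0 x + 0 * marg p1 x) / v0 y x)) (at_right 0)"
          proof -
            have d: "((\<lambda>t::real. (1 - t) * marg p0 x + t * marg p1 x) \<longlongrightarrow> (1 - 0) * marg p0 x + 0 * marg p1 x) (at_right 0)"
              by (intro tendsto_intros)
            have q: "((\<lambda>t::real. p1 (x, y) / ((1 - t) * marg p0 x + t * marg p1 x) / v0 y x) \<longlongrightarrow> p1 (x, y) / ((1 - 0) * marg p0 x + 0 * marg p1 x) / v0 y x) (at_right 0)"
              by (intro tendsto_divide[OF tendsto_divide[OF tendsto_const d]] tendsto_const) (use m0 v in auto)
            have "p1 (x, y) / ((1 - 0) * marg p0 x + 0 * marg p1 x) / v0 y x \<noteq> 0" using m0 v p1z by simp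
            from tendsto_ln[OF q this] show ?thesis by (rule tendsto_mult_left)
          qed
          have "((\<lambda>t. F t z - c z * ln t) \<longlongrightarrow> p1 (x, y) * ln (p1 (x, y) / ((1 - 0) * marg p0 x + 0 * marg p1 x) / v0 y x)) (at_right 0)"
            by (rule Lim_transform_eventually[OF lim3 ev3])
          then show ?thesis by blast
        qed
      qed
    qed
    then have "\<forall>z\<in>E. \<exists>L. ((\<lambda>t. F t z - c z * ln t) \<longlongrightarrow> L) (at_right 0)" by blast
    from bchoice[OF this] obtain L where L0: "\<forall>z\<in>E. ((\<lambda>t. F t z - c z * ln t) \<longlongrightarrow> L z) (at_right 0)"
      by blast
    have L: "\<And>z. z \<in> E \<Longrightarrow> ((\<lambda>t. F t z - c z * ln t) \<longlongrightarrow> L z) (at_right 0)" using L0 by blast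
    have Lsum: "((\<lambda>t. \<Sum>z\<in>E. F t z - c z * ln t) \<longlongrightarrow> (\<Sum>z\<in>E. L z)) (at_right 0)"
      by (rule tendsto_sum) (rule L)
    obtain x y where xy: "(x, y) \<in> E" "p0 (x, y) = 0" "marg p0 x > 0" using key by blast
    have cnn: "c z \<ge> 0" for z unfolding c_def using p1nn by auto
    have "c (x, y) \<le> (\<Sum>z\<in>E. c z)" by (rule member_le_sum) (use xy cnn in auto)
    moreover have "c (x, y) > 0" unfolding c_def using xy p1pos by auto
    ultimately have cpos: "(\<Sum>z\<in>E. c z) > 0" by linarith
    have lnlim: "filterlim (\<lambda>t. (\<Sum>z\<in>E. c z) * ln t) at_bot (at_right 0)"
      by (rule filterlim_tendsto_pos_mult_at_bot[OF tendsto_const cpos ln_at_0])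
    have "filterlim (\<lambda>t. (\<Sum>z\<in>E. F t z - c z * ln t) + (\<Sum>z\<in>E. c z) * ln t) at_bot (at_right 0)"
      unfolding filterlim_tendsto_add_at_bot_iff[OF Lsum] by (rule lnlim)
    moreover have "(\<Sum>z\<in>E. F t z - c z * ln t) + (\<Sum>z\<in>E. c z) * ln t
        = (\<Sum>(x, y)\<in>E. (p1 (x, y) - p0 (x, y)) * ln (cond (pt t) y x / v0 y x))" for t
      by (simp add: sum_subtractf sum_distrib_right F_def split_def)
    ultimately show ?thesis by simp
  qed
  have part3: "\<exists>(x, y)\<in>E. p0 (x, y) = 0 \<and> ((\<lambda>t. cond (pt t) y x) \<longlongrightarrow> 0) (at_right 0)"
  proof -
    obtain x y where xy: "(x, y) \<in> E" "p0 (x, y) = 0" "marg p0 x > 0" using key by blast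
    have "((\<lambda>t. pt t (x, y) / marg (pt t) x) \<longlongrightarrow>
            ((1 - 0) * p0 (x, y) + 0 * p1 (x, y)) / ((1 - 0) * marg p0 x + 0 * marg p1 x)) (at_right 0)"
      unfolding pt_def mpt[unfolded pt_def] using xy(3)
      by (intro tendsto_intros) auto
    then have "((\<lambda>t. cond (pt t) y x) \<longlongrightarrow> 0) (at_right 0)"
      using xy(2) by (simp add: cond_def)
    then show ?thesis using xy by blast
  qed
  show ?thesis using part1 part2 part3 by blast
qed

end
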